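(* Let $(\mathbf{F},\Delta)$ be a poset comonoid and $(\mathbf{F},\Box)$ a poset monoid on the same poset species $\mathbf{F}$ which form an adjoint pair with $\Delta\dashv\Box$. For a finite set $I$ and $x\in\mathbf{F}[I]$ let $\omega_x=\sum_{x\le y}\mu(x,y)\,y\in\mathbf{k}\mathbf{F}[I]$. Then for every decomposition $I=S\sqcup T$, \[\Delta_{S,T}(\omega_x)=\sum_{\substack{x_1\in\mathbf{F}[S],\,x_2\in\mathbf{F}[T]\\ \Box_{S,T}(x_1,x_2)=x}}\omega_{x_1}\otimes\omega_{x_2}.\]
   Context: $\mathbf{k}$ is a field of characteristic $0$. A (connected) poset species $\mathbf{F}$ assigns to each finite set $I$ a locally finite poset $\mathbf{F}[I]$, with $\mathbf{F}[\emptyset]$ a singleton $\{1\}$, and to each bijection $f:I\to J$ an order-preserving bijection $\mathbf{F}[f]:\mathbf{F}[I]\to\mathbf{F}[J]$, functorially. A poset monoid $(\mathbf{F},\Box)$ consists of order-preserving maps $\Box_{S,T}:\mathbf{F}[S]\times\mathbf{F}[T]\to\mathbf{F}[S\sqcup T]$ (product order on the source) for all pairs of disjoint finite sets $S,T$, natural with respect to bijections, associative, and with $1\in\mathbf{F}[\emptyset]$ a two-sided unit. A poset comonoid $(\mathbf{F},\Delta)$ consists of order-preserving maps $\Delta_{S,T}:\mathbf{F}[S\sqcup T]\to\mathbf{F}[S]\times\mathbf{F}[T]$, natural, coassociative, and counital ($\Delta_{I,\emptyset}(x)=(x,1)$, $\Delta_{\emptyset,I}(x)=(1,x)$). They form an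 adjoint pair with $\Delta\dashv\Box$ if for all disjoint $S,T$, $x\in\mathbf{F}[S\sqcup T]$, $y\in\mathbf{F}[S]$, $z\in\mathbf{F}[T]$: $\Delta_{S,T}(x)\le(y,z)$ (product order) iff $x\le\Box_{S,T}(y,z)$. The linearization $\mathbf{k}\mathbf{F}[I]$ is the vector space with basis $\mathbf{F}[I]$; $\Delta_{S,T}$ is extended linearly to $\mathbf{k}\mathbf{F}[I]\to\mathbf{k}\mathbf{F}[S]\otimes\mathbf{k}\mathbf{F}[T]$ by $x\mapsto y\otimes z$ when $\Delta_{S,T}(x)=(y,z)$. $\mu$ is the Möbius function of the poset $\mathbf{F}[I]$; the $\omega_x$ form the inverted basis. *)

theory Defs
  imports Main
begin

definition partial_order_on_set :: "'e set \<Rightarrow> ('e \<Rightarrow> 'e \<Rightarrow> bool) \<Rightarrow> bool" where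
  "partial_order_on_set A le \<longleftrightarrow>
     (\<forall>x\<in>A. le x x) \<and>
     (\<forall>x\<in>A. \<forall>y\<in>A. le x y \<and> le y x \<longrightarrow> x = y) \<and>
     (\<forall>x\<in>A. \<forall>y\<in>A. \<forall>z\<in>A. le x y \<and> le y z \<longrightarrow> le x z)"

definition locally_finite_poset :: "'e set \<Rightarrow> ('e \<Rightarrow> 'e \<Rightarrow> bool) \<Rightarrow> bool" where
  "locally_finite_poset A le \<longleftrightarrow> partial_order_on_set A le \<and>
     (\<forall>x\<in>A. \<forall>y\<in>A. finite {z\<in>A. le x z \<and> le z y})"

definition mobius :: "'e set \<Rightarrow> ('e \<Rightarrow> 'e \<Rightarrow> bool) \<Rightarrow> 'e \<Rightarrow> 'e \<Rightarrow> 'k::field" where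
  "mobius A le = (THE m. \<forall>x y. m x y =
      (if x \<in> A \<and> y \<in> A \<and> le x y then
         (if x = y then 1 else - (\<Sum>z\<in>{z\<in>A. le x z \<and> le z y \<and> z \<noteq> y}. m x z))
       else 0))"

text \<open>Elements of the linearization kF[I] (and of its completion) are represented by
  their coefficient functions; basis element e is bas e.\<close>
definition bas :: "'e \<Rightarrow> 'e \<Rightarrow> 'k::field" where
  "bas e = (\<lambda>u. if u = e then 1 else 0)"

definition tens :: "('e \<Rightarrow> 'k::field) \<Rightarrow> ('e \<Rightarrow> 'k) \<Rightarrow> ('e \<times> 'e \<Rightarrow> 'k)" where
  "tens f g = (\<lambda>(y, z). f y * g z)"

text \<open>Sum of a family of vectors, computed coefficientwise (each coefficient only
  receives finitely many nonzero contributions in all uses below).\<close>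
definition formal_sum :: "('i \<Rightarrow> 'v \<Rightarrow> 'k::field) \<Rightarrow> 'i set \<Rightarrow> 'v \<Rightarrow> 'k" where
  "formal_sum f P = (\<lambda>v. \<Sum>i\<in>{i\<in>P. f i v \<noteq> 0}. f i v)"

text \<open>A poset species: car I is the underlying set of F[I], le I its order,
  act f I the map F[f] : F[I] \<rightarrow> F[f ` I] for f injective on I, one the unique element of F[{}].\<close>
definition poset_species ::
  "('a set \<Rightarrow> 'e set) \<Rightarrow> ('a set \<Rightarrow> 'e \<Rightarrow> 'e \<Rightarrow> bool) \<Rightarrow> (('a \<Rightarrow> 'a) \<Rightarrow> 'a set \<Rightarrow> 'e \<Rightarrow> 'e) \<Rightarrow> 'e \<Rightarrow> bool" where
  "poset_species car le act one \<longleftrightarrow>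
     (\<forall>I. finite I \<longrightarrow> locally_finite_poset (car I) (le I)) \<and>
     car {} = {one} \<and>
     (\<forall>I f. finite I \<and> inj_on f I \<longrightarrow>
        bij_betw (act f I) (car I) (car (f ` I)) \<and>
        (\<forall>x\<in>car I. \<forall>y\<in>car I. le I x y \<longrightarrow> le (f ` I) (act f I x) (act f I y))) \<and>
     (\<forall>I f g. finite I \<and> (\<forall>i\<in>I. f i = g i) \<longrightarrow> (\<forall>x\<in>car I. act f I x = act g I x)) \<and>
     (\<forall>I. finite I \<longrightarrow> (\<forall>x\<in>car I. act id I x = x)) \<and>
     (\<forall>I f g. finite I \<and> inj_on f I \<and> inj_on g (f ` I) \<longrightarrow>
        (\<forall>x\<in>car I. act (g \<circ> f) I x = act g (f ` I) (act f I x)))"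

definition poset_monoid ::
  "('a set \<Rightarrow> 'e set) \<Rightarrow> ('a set \<Rightarrow> 'e \<Rightarrow> 'e \<Rightarrow> bool) \<Rightarrow> (('a \<Rightarrow> 'a) \<Rightarrow> 'a set \<Rightarrow> 'e \<Rightarrow> 'e) \<Rightarrow> 'e
    \<Rightarrow> ('a set \<Rightarrow> 'a set \<Rightarrow> 'e \<Rightarrow> 'e \<Rightarrow> 'e) \<Rightarrow> bool" where
  "poset_monoid car le act one mult \<longleftrightarrow>
     poset_species car le act one \<and>
     \<comment> \<open>maps F[S] x F[T] -> F[S u T]\<close>
     (\<forall>S T. finite S \<and> finite T \<and> S \<inter> T = {} \<longrightarrow>
        (\<forall>x\<in>car S. \<forall>y\<in>car T. mult S T x y \<in> car (S \<union> T))) \<and>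
     \<comment> \<open>order preserving for the product order\<close>
     (\<forall>S T. finite S \<and> finite T \<and> S \<inter> T = {} \<longrightarrow>
        (\<forall>x\<in>car S. \<forall>x'\<in>car S. \<forall>y\<in>car T. \<forall>y'\<in>car T.
           le S x x' \<and> le T y y' \<longrightarrow> le (S \<union> T) (mult S T x y) (mult S T x' y'))) \<and>
     \<comment> \<open>naturality\<close>
     (\<forall>S T f. finite S \<and> finite T \<and> S \<inter> T = {} \<and> inj_on f (S \<union> T) \<longrightarrow>
        (\<forall>x\<in>car S. \<forall>y\<in>car T.
           act f (S \<union> T) (mult S T x y) = mult (f ` S) (f ` T) (act f S x) (act f T y))) \<and>
     \<comment> \<open>associativity\<close>
     (\<forall>S T U. finite S \<and> finite T \<and> finite U \<and> S \<inter> T = {} \<and> S \<inter> U = {} \<and> T \<inter> U = {} \<longrightarrow>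
        (\<forall>x\<in>car S. \<forall>y\<in>car T. \<forall>z\<in>car U.
           mult (S \<union> T) U (mult S T x y) z = mult S (T \<union> U) x (mult T U y z))) \<and>
     \<comment> \<open>unit\<close>
     (\<forall>I. finite I \<longrightarrow> (\<forall>x\<in>car I. mult {} I one x = x \<and> mult I {} x one = x))"

definition poset_comonoid ::
  "('a set \<Rightarrow> 'e set) \<Rightarrow> ('a set \<Rightarrow> 'e \<Rightarrow> 'e \<Rightarrow> bool) \<Rightarrow> (('a \<Rightarrow> 'a) \<Rightarrow> 'a set \<Rightarrow> 'e \<Rightarrow> 'e) \<Rightarrow> 'e
    \<Rightarrow> ('a set \<Rightarrow> 'a set \<Rightarrow> 'e \<Rightarrow> 'e \<times> 'e) \<Rightarrow> bool" where
  "poset_comonoid car le act one comult \<longleftrightarrow>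
     poset_species car le act one \<and>
     \<comment> \<open>maps F[S u T] -> F[S] x F[T]\<close>
     (\<forall>S T. finite S \<and> finite T \<and> S \<inter> T = {} \<longrightarrow>
        (\<forall>x\<in>car (S \<union> T). fst (comult S T x) \<in> car S \<and> snd (comult S T x) \<in> car T)) \<and>
     \<comment> \<open>order preserving into the product order\<close>
     (\<forall>S T. finite S \<and> finite T \<and> S \<inter> T = {} \<longrightarrow>
        (\<forall>x\<in>car (S \<union> T). \<forall>x'\<in>car (S \<union> T). le (S \<union> T) x x' \<longrightarrow>
           le S (fst (comult S T x)) (fst (comult S T x')) \<and>
           le T (snd (comult S T x)) (snd (comult S T x')))) \<and>
     \<comment> \<open>naturality\<close>
     (\<forall>S T f. finite S \<and> finite T \<and> S \<inter> T = {} \<and> inj_on f (S \<union> T) \<longrightarrow>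
        (\<forall>x\<in>car (S \<union> T).
           comult (f ` S) (f ` T) (act f (S \<union> T) x) =
             (act f S (fst (comult S T x)), act f T (snd (comult S T x))))) \<and>
     \<comment> \<open>coassociativity\<close>
     (\<forall>S T U. finite S \<and> finite T \<and> finite U \<and> S \<inter> T = {} \<and> S \<inter> U = {} \<and> T \<inter> U = {} \<longrightarrow>
        (\<forall>x\<in>car (S \<union> T \<union> U).
           comult S T (fst (comult (S \<union> T) U x)) =
             (fst (comult S (T \<union> U) x), fst (comult T U (snd (comult S (T \<union> U) x)))) \<and>
           snd (comult (S \<union> T) U x) = snd (comult T U (snd (comult S (T \<union> U) x))))) \<and>
     \<comment> \<open>counit\<close>
     (\<forall>I. finite I \<longrightarrow> (\<forall>x\<in>car I. comult I {} x = (x, one) \<and> comult {} I x = (one, x)))"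

definition adjoint_pair ::
  "('a set \<Rightarrow> 'e set) \<Rightarrow> ('a set \<Rightarrow> 'e \<Rightarrow> 'e \<Rightarrow> bool)
    \<Rightarrow> ('a set \<Rightarrow> 'a set \<Rightarrow> 'e \<Rightarrow> 'e \<times> 'e) \<Rightarrow> ('a set \<Rightarrow> 'a set \<Rightarrow> 'e \<Rightarrow> 'e \<Rightarrow> 'e) \<Rightarrow> bool" where
  "adjoint_pair car le comult mult \<longleftrightarrow>
     (\<forall>S T. finite S \<and> finite T \<and> S \<inter> T = {} \<longrightarrow>
        (\<forall>x\<in>car (S \<union> T). \<forall>y\<in>car S. \<forall>z\<in>car T.
           (le S (fst (comult S T x)) y \<and> le T (snd (comult S T x)) z) \<longleftrightarrow>
           le (S \<union> T) x (mult S T y z)))"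

definition omega :: "('a set \<Rightarrow> 'e set) \<Rightarrow> ('a set \<Rightarrow> 'e \<Rightarrow> 'e \<Rightarrow> bool) \<Rightarrow> 'a set \<Rightarrow> 'e \<Rightarrow> 'e \<Rightarrow> 'k::field" where
  "omega car le I x = formal_sum (\<lambda>y. \<lambda>u. mobius (car I) (le I) x y * bas y u) {y\<in>car I. le I x y}"

definition lin_comult :: "('a set \<Rightarrow> 'e set) \<Rightarrow> ('a set \<Rightarrow> 'a set \<Rightarrow> 'e \<Rightarrow> 'e \<times> 'e)
    \<Rightarrow> 'a set \<Rightarrow> 'a set \<Rightarrow> ('e \<Rightarrow> 'k::field) \<Rightarrow> ('e \<times> 'e \<Rightarrow> 'k)" where
  "lin_comult car comult S T v =
     formal_sum (\<lambda>w. \<lambda>p. v w * tens (bas (fst (comult S T w))) (bas (snd (comult S T w))) p) (car (S \<union> T))"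

end

theory Submission
  imports Defs
begin


definition mob_step :: "'e set \<Rightarrow> ('e \<Rightarrow> 'e \<Rightarrow> bool) \<Rightarrow> ('e \<Rightarrow> 'e \<Rightarrow> 'k) \<Rightarrow> 'e \<Rightarrow> 'e \<Rightarrow> 'k::field" where
  "mob_step A le m x y = (if x \<in> A \<and> y \<in> A \<and> le x y then
         (if x = y then 1 else - (\<Sum>z\<in>{z\<in>A. le x z \<and> le z y \<and> z \<noteq> y}. m x z))
       else 0)"

definition mobR :: "'e set \<Rightarrow> ('e \<Rightarrow> 'e \<Rightarrow> bool) \<Rightarrow> (('e \<times> 'e) \<times> ('e \<times> 'e)) set" where
  "mobR A le = {((x,z),(x',y)). x' = x \<and> x \<in> A \<and> y \<in> A \<and> z \<in> A \<and> le x z \<and> le z y \<and> z \<noteq> y}"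

lemma lfp_facts:
  assumes "locally_finite_poset A le"
  shows "\<And>x. x \<in> A \<Longrightarrow> le x x"
    and "\<And>x y. x \<in> A \<Longrightarrow> y \<in> A \<Longrightarrow> le x y \<Longrightarrow> le y x \<Longrightarrow> x = y"
    and "\<And>x y z. x \<in> A \<Longrightarrow> y \<in> A \<Longrightarrow> z \<in> A \<Longrightarrow> le x y \<Longrightarrow> le y z \<Longrightarrow> le x z"
    and "\<And>x y. x \<in> A \<Longrightarrow> y \<in> A \<Longrightarrow> finite {z\<in>A. le x z \<and> le z y}"
  using assms unfolding locally_finite_poset_def partial_order_on_set_def by blast+

lemma wf_mobR:
  assumes "locally_finite_poset A le"
  shows "wf (mobR A le)"
proof (rule wf_subset)
  show "wf (measure (\<lambda>(x,y). card {z\<in>A. le x z \<and> le z y}))" by simp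
  show "mobR A le \<subseteq> measure (\<lambda>(x,y). card {z\<in>A. le x z \<and> le z y})"
  proof
    fix p assume "p \<in> mobR A le"
    then obtain x z y where p: "p = ((x,z),(x,y))" and h: "x \<in> A" "y \<in> A" "z \<in> A" "le x z" "le z y" "z \<noteq> y"
      unfolding mobR_def by blast
    have fin: "finite {w\<in>A. le x w \<and> le w y}" using lfp_facts(4)[OF assms] h by blast
    have "{w\<in>A. le x w \<and> le w z} \<subset> {w\<in>A. le x w \<and> le w y}"
    proof
      show "{w\<in>A. le x w \<and> le w z} \<subseteq> {w\<in>A. le x w \<and> le w y}"
        using lfp_facts(3)[OF assms] h by blast
      have "y \<in> {w\<in>A. le x w \<and> le w y}" using lfp_facts(1,3)[OF assms] h by blast
      moreover have "y \<notin> {w\<in>A. le x w \<and> le w z}" using lfp_facts(2)[OF assms] h by blast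
      ultimately show "{w\<in>A. le x w \<and> le w z} \<noteq> {w\<in>A. le x w \<and> le w y}" by blast
    qed
    then have "card {w\<in>A. le x w \<and> le w z} < card {w\<in>A. le x w \<and> le w y}"
      using fin psubset_card_mono by blast
    then show "p \<in> measure (\<lambda>(x,y). card {z\<in>A. le x z \<and> le z y})" using p by simp
  qed
qed

lemma mobius_ex1:
  assumes "locally_finite_poset A le"
  shows "\<exists>!m::'e \<Rightarrow> 'e \<Rightarrow> 'k::field. \<forall>x y. m x y = mob_step A le m x y"
proof -
  let ?R = "mobR A le"
  have wf: "wf ?R" by (rule wf_mobR[OF assms])
  define G where "G = (\<lambda>(f::'e\<times>'e \<Rightarrow> 'k) (p::'e\<times>'e). mob_step A le (\<lambda>a b. f (a,b)) (fst p) (snd p))"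
  define m where "m = (\<lambda>a b. wfrec ?R G (a,b))"
  have ex: "\<forall>x y. m x y = mob_step A le m x y"
  proof (intro allI)
    fix x y
    have "m x y = G (cut (wfrec ?R G) ?R (x,y)) (x,y)"
      unfolding m_def by (rule wfrec[OF wf])
    also have "\<dots> = mob_step A le m x y"
    proof -
      have "(\<Sum>z\<in>{z\<in>A. le x z \<and> le z y \<and> z \<noteq> y}. cut (wfrec ?R G) ?R (x,y) (x,z))
          = (\<Sum>z\<in>{z\<in>A. le x z \<and> le z y \<and> z \<noteq> y}. m x z)" if "x \<in> A" "y \<in> A"
        using that by (intro sum.cong refl) (simp add: cut_apply mobR_def m_def)
      then show ?thesis unfolding G_def mob_step_def by simp
    qed
    finally show "m x y = mob_step A le m x y" .
  qed
  have un: "m1 = m2" if h1: "\<forall>x y. m1 x y = mob_step A le m1 x y" and h2: "\<forall>x y. m2 x y = mob_step A le m2 x y"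
    for m1 m2 :: "'e \<Rightarrow> 'e \<Rightarrow> 'k"
  proof -
    have "\<forall>x y. p = (x,y) \<longrightarrow> m1 x y = m2 x y" for p
    proof (induction p rule: wf_induct[OF wf])
      case (1 p)
      show ?case
      proof (intro allI impI)
        fix x y assume p: "p = (x,y)"
        have "mob_step A le m1 x y = mob_step A le m2 x y"
          unfolding mob_step_def using 1 p
          by (auto intro!: sum.cong simp: mobR_def)
        then show "m1 x y = m2 x y" using h1 h2 by metis
      qed
    qed
    then show ?thesis by blast
  qed
  show ?thesis using ex un by blast
qed

lemma mobius_eq:
  fixes A :: "'e set"
  assumes "locally_finite_poset A le"
  shows "mobius A le x y = (mob_step A le (mobius A le) x y :: 'k::field)"
proof -
  have "mobius A le = (THE m::'e \<Rightarrow> 'e \<Rightarrow> 'k. \<forall>x y. m x y = mob_step A le m x y)"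
    unfolding mobius_def mob_step_def by simp
  then show ?thesis using theI'[OF mobius_ex1[OF assms, where 'k='k]] by metis
qed

lemma mobius_zero:
  assumes "locally_finite_poset A le" "\<not> (x \<in> A \<and> y \<in> A \<and> le x y)"
  shows "mobius A le x y = (0 :: 'k::field)"
  using mobius_eq[OF assms(1), of x y] assms(2) unfolding mob_step_def by simp

lemma mobius_sum:
  assumes lf: "locally_finite_poset A le" and h: "x \<in> A" "y \<in> A" "le x y"
  shows "(\<Sum>z\<in>{z\<in>A. le x z \<and> le z y}. mobius A le x z) = (if x = y then 1 else (0::'k::field))"
proof (cases "x = y")
  case True
  then have "{z\<in>A. le x z \<and> le z y} = {x}" using lfp_facts(1,2)[OF lf] h by blast
  then show ?thesis using mobius_eq[OF lf, of x x, where 'k='k] True h unfolding mob_step_def by simp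
next
  case False
  have fin: "finite {z\<in>A. le x z \<and> le z y \<and> z \<noteq> y}"
    using lfp_facts(4)[OF lf, of x y] h by (auto intro: rev_finite_subset)
  have "{z\<in>A. le x z \<and> le z y} = insert y {z\<in>A. le x z \<and> le z y \<and> z \<noteq> y}"
    using lfp_facts(1)[OF lf] h by blast
  then have "(\<Sum>z\<in>{z\<in>A. le x z \<and> le z y}. mobius A le x z :: 'k)
     = mobius A le x y + (\<Sum>z\<in>{z\<in>A. le x z \<and> le z y \<and> z \<noteq> y}. mobius A le x z)"
    using fin by simp
  also have "\<dots> = 0" using mobius_eq[OF lf, of x y, where 'k='k] False h unfolding mob_step_def by simp
  finally show ?thesis using False by simp
qed

lemma omega_eq:
  assumes "locally_finite_poset (car I) (le I)"
  shows "(omega car le I x :: 'e \<Rightarrow> 'k::field) = mobius (car I) (le I) x"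
proof
  fix u
  have "{y\<in>{y\<in>car I. le I x y}. (mobius (car I) (le I) x y :: 'k) * bas y u \<noteq> 0}
      = (if u \<in> car I \<and> le I x u \<and> mobius (car I) (le I) x u \<noteq> (0::'k) then {u} else {})"
    by (auto simp: bas_def)
  then show "(omega car le I x :: 'e \<Rightarrow> 'k) u = mobius (car I) (le I) x u"
    unfolding omega_def formal_sum_def
    using mobius_zero[OF assms, of x u, where 'k='k] by (auto simp: bas_def)
qed



lemma fsum_eq:
  assumes "finite B" "{i\<in>P. f i \<noteq> 0} \<subseteq> B" "B \<subseteq> P"
  shows "(\<Sum>i\<in>{i\<in>P. f i \<noteq> 0}. f i) = sum f B"
  by (rule sum.mono_neutral_left) (use assms in auto)

theorem mainTheorem2:
  fixes car :: "'a set \<Rightarrow> 'e set"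
    and le :: "'a set \<Rightarrow> 'e \<Rightarrow> 'e \<Rightarrow> bool"
    and act :: "('a \<Rightarrow> 'a) \<Rightarrow> 'a set \<Rightarrow> 'e \<Rightarrow> 'e"
    and one :: 'e
    and mult :: "'a set \<Rightarrow> 'a set \<Rightarrow> 'e \<Rightarrow> 'e \<Rightarrow> 'e"
    and comult :: "'a set \<Rightarrow> 'a set \<Rightarrow> 'e \<Rightarrow> 'e \<times> 'e"
    and S T :: "'a set"
    and x :: 'e
  assumes "poset_comonoid car le act one comult"
    and "poset_monoid car le act one mult"
    and "adjoint_pair car le comult mult"
    and "finite S" and "finite T" and "S \<inter> T = {}"
    and "x \<in> car (S \<union> T)"
  shows "(lin_comult car comult S T (omega car le (S \<union> T) x) :: 'e \<times> 'e \<Rightarrow> 'k::field_char_0) =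
         formal_sum (\<lambda>(x1, x2). tens (omega car le S x1) (omega car le T x2))
           {(x1, x2). x1 \<in> car S \<and> x2 \<in> car T \<and> mult S T x1 x2 = x}"
proof -
  note fin = assms(4,5,6)
  define A where "A = car (S \<union> T)"
  define lA where "lA = le (S \<union> T)"
  define PS where "PS = car S"
  define PT where "PT = car T"
  define lS where "lS = le S"
  define lT where "lT = le T"
  define D where "D = comult S T"
  define M where "M = mult S T"
  have co1: "\<forall>S T. finite S \<and> finite T \<and> S \<inter> T = {} \<longrightarrow>
        (\<forall>x\<in>car (S \<union> T). fst (comult S T x) \<in> car S \<and> snd (comult S T x) \<in> car T)"
    using conjunct1[OF conjunct2[OF assms(1)[unfolded poset_comonoid_def]]] .
  have co2: "\<forall>S T. finite S \<and> finite T \<and> S \<inter> T = {} \<longrightarrow>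
        (\<forall>x\<in>car (S \<union> T). \<forall>x'\<in>car (S \<union> T). le (S \<union> T) x x' \<longrightarrow>
           le S (fst (comult S T x)) (fst (comult S T x')) \<and>
           le T (snd (comult S T x)) (snd (comult S T x')))"
    using conjunct1[OF conjunct2[OF conjunct2[OF assms(1)[unfolded poset_comonoid_def]]]] .
  have spec: "poset_species car le act one"
    using conjunct1[OF assms(1)[unfolded poset_comonoid_def]] .
  have mo1: "\<forall>S T. finite S \<and> finite T \<and> S \<inter> T = {} \<longrightarrow>
        (\<forall>x\<in>car S. \<forall>y\<in>car T. mult S T x y \<in> car (S \<union> T))"
    using conjunct1[OF conjunct2[OF assms(2)[unfolded poset_monoid_def]]] .
  have sp1: "\<forall>I. finite I \<longrightarrow> locally_finite_poset (car I) (le I)"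
    using conjunct1[OF spec[unfolded poset_species_def]] .
  have fST: "finite (S \<union> T)" using fin by simp
  have lfA: "locally_finite_poset A lA" using sp1 fST unfolding A_def lA_def by blast
  have lfS: "locally_finite_poset PS lS" using sp1 fin unfolding PS_def lS_def by blast
  have lfT: "locally_finite_poset PT lT" using sp1 fin unfolding PT_def lT_def by blast
  have Dmap: "\<And>w. w \<in> A \<Longrightarrow> fst (D w) \<in> PS \<and> snd (D w) \<in> PT"
    using co1 fin unfolding A_def PS_def PT_def D_def by blast
  have Dmono: "\<And>w w'. w \<in> A \<Longrightarrow> w' \<in> A \<Longrightarrow> lA w w' \<Longrightarrow> lS (fst (D w)) (fst (D w')) \<and> lT (snd (D w)) (snd (D w'))"
    using co2 fin unfolding A_def lA_def lS_def lT_def D_def by blast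
  have Mmap: "\<And>a b. a \<in> PS \<Longrightarrow> b \<in> PT \<Longrightarrow> M a b \<in> A"
    using mo1 fin unfolding A_def PS_def PT_def M_def by blast
  have adj: "\<And>w a b. w \<in> A \<Longrightarrow> a \<in> PS \<Longrightarrow> b \<in> PT \<Longrightarrow> (lS (fst (D w)) a \<and> lT (snd (D w)) b) \<longleftrightarrow> lA w (M a b)"
    using assms(3) fin unfolding adjoint_pair_def A_def lA_def PS_def PT_def lS_def lT_def D_def M_def by blast
  have xA: "x \<in> A" using assms(7) A_def by simp
  define x0 where "x0 = fst (D x)"
  define y0 where "y0 = snd (D x)"
  have x0: "x0 \<in> PS" and y0: "y0 \<in> PT" using Dmap[OF xA] x0_def y0_def by auto
  note reflA = lfp_facts(1)[OF lfA] and antiA = lfp_facts(2)[OF lfA] and transA = lfp_facts(3)[OF lfA]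
    and finA = lfp_facts(4)[OF lfA]
  note reflS = lfp_facts(1)[OF lfS] and antiS = lfp_facts(2)[OF lfS] and transS = lfp_facts(3)[OF lfS]
    and finS = lfp_facts(4)[OF lfS]
  note reflT = lfp_facts(1)[OF lfT] and antiT = lfp_facts(2)[OF lfT] and transT = lfp_facts(3)[OF lfT]
    and finT = lfp_facts(4)[OF lfT]
  define mu where "mu = (mobius A lA :: 'e \<Rightarrow> 'e \<Rightarrow> 'k)"
  define muS where "muS = (mobius PS lS :: 'e \<Rightarrow> 'e \<Rightarrow> 'k)"
  define muT where "muT = (mobius PT lT :: 'e \<Rightarrow> 'e \<Rightarrow> 'k)"
  define h1 where "h1 = (\<lambda>p. \<Sum>w\<in>{w\<in>A. lA x w \<and> D w = p}. mu x w)"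
  define h2 where "h2 = (\<lambda>p. \<Sum>q\<in>{q. fst q \<in> PS \<and> snd q \<in> PT \<and> M (fst q) (snd q) = x \<and>
      fst p \<in> PS \<and> snd p \<in> PT \<and> lS (fst q) (fst p) \<and> lT (snd q) (snd p)}. muS (fst q) (fst p) * muT (snd q) (snd p))"
  have Kout: "h1 p = 0 \<and> h2 p = 0" if "\<not> (fst p \<in> PS \<and> snd p \<in> PT)" for p
  proof -
    have e1: "{w\<in>A. lA x w \<and> D w = p} = {}" using Dmap that by auto
    have e2: "{q. fst q \<in> PS \<and> snd q \<in> PT \<and> M (fst q) (snd q) = x \<and>
      fst p \<in> PS \<and> snd p \<in> PT \<and> lS (fst q) (fst p) \<and> lT (snd q) (snd p)} = {}" using that by auto
    show ?thesis unfolding h1_def h2_def e1 e2 by simp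
  qed
  have lowQ: "lS x0 (fst q) \<and> lT y0 (snd q)" if "fst q \<in> PS" "snd q \<in> PT" "M (fst q) (snd q) = x" for q
  proof -
    have "lA x (M (fst q) (snd q))" using that(3) reflA[OF xA] by simp
    then show ?thesis using adj[OF xA that(1,2)] unfolding x0_def y0_def by blast
  qed
  have K0: "h1 p = 0 \<and> h2 p = 0" if "\<not> (lS x0 (fst p) \<and> lT y0 (snd p))" "fst p \<in> PS" "snd p \<in> PT" for p
  proof -
    have e1: "{w\<in>A. lA x w \<and> D w = p} = {}"
    proof -
      have False if "w \<in> A" "lA x w" "D w = p" for w
        using Dmono[OF xA that(1,2)] that(3) \<open>\<not> (lS x0 (fst p) \<and> lT y0 (snd p))\<close>
        unfolding x0_def y0_def by blast
      then show ?thesis by blast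
    qed
    have e2: "{q. fst q \<in> PS \<and> snd q \<in> PT \<and> M (fst q) (snd q) = x \<and>
      fst p \<in> PS \<and> snd p \<in> PT \<and> lS (fst q) (fst p) \<and> lT (snd q) (snd p)} = {}"
    proof -
      have False if "fst q \<in> PS" "snd q \<in> PT" "M (fst q) (snd q) = x" "lS (fst q) (fst p)" "lT (snd q) (snd p)" for q
        using lowQ[OF that(1-3)] transS[OF x0 that(1) \<open>fst p \<in> PS\<close>] transT[OF y0 that(2) \<open>snd p \<in> PT\<close>]
          that(4,5) \<open>\<not> (lS x0 (fst p) \<and> lT y0 (snd p))\<close> by blast
      then show ?thesis by blast
    qed
    show ?thesis unfolding h1_def h2_def e1 e2 by simp
  qed
  define Iv where "Iv = (\<lambda>p. {p'. fst p' \<in> PS \<and> snd p' \<in> PT \<and> lS x0 (fst p') \<and> lS (fst p') (fst p) \<and>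
      lT y0 (snd p') \<and> lT (snd p') (snd p)})"
  have finIv: "finite (Iv p)" if "fst p \<in> PS" "snd p \<in> PT" for p
  proof -
    have "Iv p \<subseteq> {z\<in>PS. lS x0 z \<and> lS z (fst p)} \<times> {z\<in>PT. lT y0 z \<and> lT z (snd p)}"
      unfolding Iv_def by auto
    moreover have "finite ({z\<in>PS. lS x0 z \<and> lS z (fst p)} \<times> {z\<in>PT. lT y0 z \<and> lT z (snd p)})"
      using finS[OF x0] finT[OF y0] that by blast
    ultimately show ?thesis by (rule finite_subset)
  qed
  have K1: "sum h1 (Iv p) = (if M (fst p) (snd p) = x then 1 else 0)" if pS: "fst p \<in> PS" and pT: "snd p \<in> PT" for p
  proof -
    define m where "m = M (fst p) (snd p)"
    have mA: "m \<in> A" using Mmap[OF pS pT] m_def by simp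
    define W0 where "W0 = {w\<in>A. lA x w \<and> lA w m}"
    have finW0: "finite W0" using finA[OF xA mA] unfolding W0_def .
    have "sum h1 (Iv p) = (\<Sum>p'\<in>Iv p. sum (mu x) {w. w \<in> W0 \<and> D w = p'})"
    proof (rule sum.cong[OF refl])
      fix p' assume p': "p' \<in> Iv p"
      have "{w\<in>A. lA x w \<and> D w = p'} = {w. w \<in> W0 \<and> D w = p'}"
      proof (intro set_eqI iffI)
        fix w assume w: "w \<in> {w\<in>A. lA x w \<and> D w = p'}"
        then have "lS (fst (D w)) (fst p) \<and> lT (snd (D w)) (snd p)" using p' unfolding Iv_def by auto
        then have "lA w m" using adj[of w "fst p" "snd p"] w pS pT unfolding m_def by blast
        then show "w \<in> {w. w \<in> W0 \<and> D w = p'}" using w unfolding W0_def by blast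
      next
        fix w assume "w \<in> {w. w \<in> W0 \<and> D w = p'}"
        then show "w \<in> {w\<in>A. lA x w \<and> D w = p'}" unfolding W0_def by blast
      qed
      then show "h1 p' = sum (mu x) {w. w \<in> W0 \<and> D w = p'}" unfolding h1_def by simp
    qed
    also have "\<dots> = sum (mu x) W0"
    proof (rule sum.group[OF finW0 finIv[OF pS pT]])
      show "D ` W0 \<subseteq> Iv p"
      proof
        fix r assume "r \<in> D ` W0"
        then obtain w where w: "w \<in> A" "lA x w" "lA w m" "r = D w" unfolding W0_def by blast
        have "lS x0 (fst r) \<and> lT y0 (snd r)" using Dmono[OF xA w(1,2)] w(4) unfolding x0_def y0_def by simp
        moreover have "lS (fst r) (fst p) \<and> lT (snd r) (snd p)" using adj[OF w(1) pS pT] w(3,4) unfolding m_def by simp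
        moreover have "fst r \<in> PS \<and> snd r \<in> PT" using Dmap[OF w(1)] w(4) by simp
        ultimately show "r \<in> Iv p" unfolding Iv_def by simp
      qed
    qed
    also have "\<dots> = (if m = x then 1 else 0)"
    proof (cases "lA x m")
      case True
      have "sum (mu x) W0 = (if x = m then 1 else 0)"
        using mobius_sum[OF lfA xA mA True, where 'k='k] unfolding W0_def mu_def .
      then show ?thesis by auto
    next
      case False
      then have "W0 = {}" using transA[OF xA _ mA] unfolding W0_def by blast
      moreover have "m \<noteq> x" using False reflA[OF xA] by blast
      ultimately show ?thesis by simp
    qed
    finally show ?thesis unfolding m_def .
  qed
  have K2: "sum h2 (Iv p) = (if M (fst p) (snd p) = x then 1 else 0)" if pS: "fst p \<in> PS" and pT: "snd p \<in> PT" for p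
  proof -
    define Q0 where "Q0 = {q. fst q \<in> PS \<and> snd q \<in> PT \<and> M (fst q) (snd q) = x \<and> lS (fst q) (fst p) \<and> lT (snd q) (snd p)}"
    define f where "f = (\<lambda>q p'. muS (fst q) (fst p') * muT (snd q) (snd p'))"
    define R where "R = (\<lambda>p' q. lS (fst q) (fst p') \<and> lT (snd q) (snd p'))"
    have finQ0: "finite Q0"
    proof -
      have "Q0 \<subseteq> {z\<in>PS. lS x0 z \<and> lS z (fst p)} \<times> {z\<in>PT. lT y0 z \<and> lT z (snd p)}"
      proof
        fix q assume "q \<in> Q0"
        then have q: "fst q \<in> PS" "snd q \<in> PT" "M (fst q) (snd q) = x" "lS (fst q) (fst p)" "lT (snd q) (snd p)"
          unfolding Q0_def by auto
        then show "q \<in> {z\<in>PS. lS x0 z \<and> lS z (fst p)} \<times> {z\<in>PT. lT y0 z \<and> lT z (snd p)}"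
          using lowQ[OF q(1-3)] by (cases q) auto
      qed
      moreover have "finite ({z\<in>PS. lS x0 z \<and> lS z (fst p)} \<times> {z\<in>PT. lT y0 z \<and> lT z (snd p)})"
        using finS[OF x0] finT[OF y0] pS pT by blast
      ultimately show ?thesis by (rule finite_subset)
    qed
    have "sum h2 (Iv p) = (\<Sum>p'\<in>Iv p. sum (\<lambda>q. f q p') {q. q \<in> Q0 \<and> R p' q})"
    proof (rule sum.cong[OF refl])
      fix p' assume p': "p' \<in> Iv p"
      have p'S: "fst p' \<in> PS" and p'T: "snd p' \<in> PT" and p'le: "lS (fst p') (fst p)" "lT (snd p') (snd p)"
        using p' unfolding Iv_def by auto
      have "{q. fst q \<in> PS \<and> snd q \<in> PT \<and> M (fst q) (snd q) = x \<and>
        fst p' \<in> PS \<and> snd p' \<in> PT \<and> lS (fst q) (fst p') \<and> lT (snd q) (snd p')} = {q. q \<in> Q0 \<and> R p' q}"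
      proof (intro set_eqI iffI)
        fix q assume "q \<in> {q. fst q \<in> PS \<and> snd q \<in> PT \<and> M (fst q) (snd q) = x \<and>
          fst p' \<in> PS \<and> snd p' \<in> PT \<and> lS (fst q) (fst p') \<and> lT (snd q) (snd p')}"
        then have q: "fst q \<in> PS" "snd q \<in> PT" "M (fst q) (snd q) = x" "lS (fst q) (fst p')" "lT (snd q) (snd p')"
          by auto
        have "lS (fst q) (fst p)" using transS[OF q(1) p'S pS q(4) p'le(1)] .
        moreover have "lT (snd q) (snd p)" using transT[OF q(2) p'T pT q(5) p'le(2)] .
        ultimately show "q \<in> {q. q \<in> Q0 \<and> R p' q}" using q unfolding Q0_def R_def by blast
      next
        fix q assume "q \<in> {q. q \<in> Q0 \<and> R p' q}"
        then show "q \<in> {q. fst q \<in> PS \<and> snd q \<in> PT \<and> M (fst q) (snd q) = x \<and>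
          fst p' \<in> PS \<and> snd p' \<in> PT \<and> lS (fst q) (fst p') \<and> lT (snd q) (snd p')}"
          using p'S p'T unfolding Q0_def R_def by blast
      qed
      then show "h2 p' = sum (\<lambda>q. f q p') {q. q \<in> Q0 \<and> R p' q}" unfolding h2_def f_def by simp
    qed
    also have "\<dots> = (\<Sum>q\<in>Q0. sum (f q) {p'. p' \<in> Iv p \<and> R p' q})"
      by (rule sum.swap_restrict[OF finIv[OF pS pT] finQ0])
    also have "\<dots> = (\<Sum>q\<in>Q0. if q = p then 1 else 0)"
    proof (rule sum.cong[OF refl])
      fix q assume "q \<in> Q0"
      then have q: "fst q \<in> PS" "snd q \<in> PT" "M (fst q) (snd q) = x" "lS (fst q) (fst p)" "lT (snd q) (snd p)"
        unfolding Q0_def by auto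
      have low: "lS x0 (fst q)" "lT y0 (snd q)" using lowQ[OF q(1-3)] by auto
      have "{p'. p' \<in> Iv p \<and> R p' q} = {z\<in>PS. lS (fst q) z \<and> lS z (fst p)} \<times> {z\<in>PT. lT (snd q) z \<and> lT z (snd p)}"
      proof (intro set_eqI iffI)
        fix r assume "r \<in> {p'. p' \<in> Iv p \<and> R p' q}"
        then show "r \<in> {z\<in>PS. lS (fst q) z \<and> lS z (fst p)} \<times> {z\<in>PT. lT (snd q) z \<and> lT z (snd p)}"
          unfolding Iv_def R_def by (cases r) auto
      next
        fix r assume "r \<in> {z\<in>PS. lS (fst q) z \<and> lS z (fst p)} \<times> {z\<in>PT. lT (snd q) z \<and> lT z (snd p)}"
        then have r: "fst r \<in> PS" "snd r \<in> PT" "lS (fst q) (fst r)" "lS (fst r) (fst p)" "lT (snd q) (snd r)" "lT (snd r) (snd p)"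
          by auto
        have "lS x0 (fst r)" using transS[OF x0 q(1) r(1) low(1) r(3)] .
        moreover have "lT y0 (snd r)" using transT[OF y0 q(2) r(2) low(2) r(5)] .
        ultimately show "r \<in> {p'. p' \<in> Iv p \<and> R p' q}" using r unfolding Iv_def R_def by simp
      qed
      then have "sum (f q) {p'. p' \<in> Iv p \<and> R p' q}
          = (\<Sum>a\<in>{z\<in>PS. lS (fst q) z \<and> lS z (fst p)}. \<Sum>b\<in>{z\<in>PT. lT (snd q) z \<and> lT z (snd p)}. muS (fst q) a * muT (snd q) b)"
        unfolding f_def by (simp add: sum.cartesian_product')
      also have "\<dots> = (\<Sum>a\<in>{z\<in>PS. lS (fst q) z \<and> lS z (fst p)}. muS (fst q) a) *
                      (\<Sum>b\<in>{z\<in>PT. lT (snd q) z \<and> lT z (snd p)}. muT (snd q) b)"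
        by (rule sum_product[symmetric])
      also have "\<dots> = (if fst q = fst p then 1 else 0) * (if snd q = snd p then 1 else 0)"
        using mobius_sum[OF lfS q(1) pS q(4), where 'k='k] mobius_sum[OF lfT q(2) pT q(5), where 'k='k]
        unfolding muS_def muT_def by simp
      also have "\<dots> = (if q = p then 1 else 0)" by (auto simp: prod_eq_iff)
      finally show "sum (f q) {p'. p' \<in> Iv p \<and> R p' q} = (if q = p then 1 else 0)" .
    qed
    also have "\<dots> = (if p \<in> Q0 then 1 else 0)"
      using sum.delta[OF finQ0, of p "\<lambda>_. 1::'k"] by (simp add: eq_commute)
    also have "\<dots> = (if M (fst p) (snd p) = x then 1 else 0)"
      unfolding Q0_def using pS pT reflS reflT by auto
    finally show ?thesis .
  qed
  have ind: "\<forall>p. fst p \<in> PS \<longrightarrow> snd p \<in> PT \<longrightarrow> card (Iv p) = n \<longrightarrow> h1 p = h2 p" for n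
  proof (induction n rule: less_induct)
    case (less n)
    show ?case
    proof (intro allI impI)
      fix p :: "'e \<times> 'e"
      assume pS: "fst p \<in> PS" and pT: "snd p \<in> PT" and cn: "card (Iv p) = n"
      show "h1 p = h2 p"
      proof (cases "lS x0 (fst p) \<and> lT y0 (snd p)")
        case False
        then show ?thesis using K0[OF False pS pT] by simp
      next
        case True
        have pin: "p \<in> Iv p" unfolding Iv_def using True pS pT reflS reflT by auto
        have rest: "sum h1 (Iv p - {p}) = sum h2 (Iv p - {p})"
        proof (rule sum.cong[OF refl])
          fix p' assume p': "p' \<in> Iv p - {p}"
          have p'S: "fst p' \<in> PS" and p'T: "snd p' \<in> PT" using p' unfolding Iv_def by auto
          have sub: "Iv p' \<subseteq> Iv p"
          proof
            fix r assume r: "r \<in> Iv p'"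
            have "lS (fst r) (fst p)" using r p' transS[of "fst r" "fst p'" "fst p"] pS unfolding Iv_def by auto
            moreover have "lT (snd r) (snd p)" using r p' transT[of "snd r" "snd p'" "snd p"] pT unfolding Iv_def by auto
            ultimately show "r \<in> Iv p" using r unfolding Iv_def by auto
          qed
          have "p \<notin> Iv p'"
          proof
            assume "p \<in> Iv p'"
            then have "lS (fst p) (fst p')" "lT (snd p) (snd p')" unfolding Iv_def by auto
            moreover have "lS (fst p') (fst p)" "lT (snd p') (snd p)" using p' unfolding Iv_def by auto
            ultimately have "fst p' = fst p" "snd p' = snd p"
              using antiS[OF p'S pS] antiT[OF p'T pT] by auto
            then have "p' = p" by (simp add: prod_eq_iff)
            then show False using p' by blast
          qed
          then have "Iv p' \<subset> Iv p" using sub pin by blast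
          then have "card (Iv p') < n" using cn finIv[OF pS pT] psubset_card_mono by blast
          then show "h1 p' = h2 p'" using less[rule_format, OF _ p'S p'T refl] by simp
        qed
        have e1: "sum h1 (Iv p) = h1 p + sum h1 (Iv p - {p})"
          using sum.remove[OF finIv[OF pS pT] pin] .
        have e2: "sum h2 (Iv p) = h2 p + sum h2 (Iv p - {p})"
          using sum.remove[OF finIv[OF pS pT] pin] .
        show ?thesis using e1 e2 rest K1[OF pS pT] K2[OF pS pT] by simp
      qed
    qed
  qed
  have main: "h1 p = h2 p" for p
  proof (cases "fst p \<in> PS \<and> snd p \<in> PT")
    case True then show ?thesis using ind by blast
  next
    case False then show ?thesis using Kout[OF False] by simp
  qed
  have L: "(lin_comult car comult S T (omega car le (S \<union> T) x) :: 'e \<times> 'e \<Rightarrow> 'k) p = h1 p" for p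
  proof -
    have om: "(omega car le (S \<union> T) x :: 'e \<Rightarrow> 'k) = mu x"
      using omega_eq[where car=car and le=le and I="S \<union> T" and x=x and 'k='k] lfA unfolding mu_def A_def lA_def by simp
    define W where "W = {w\<in>A. lA x w \<and> D w = p}"
    have finW: "finite W"
    proof (cases "fst p \<in> PS \<and> snd p \<in> PT")
      case True
      have "W \<subseteq> {w\<in>A. lA x w \<and> lA w (M (fst p) (snd p))}"
      proof
        fix w assume "w \<in> W"
        then have w: "w \<in> A" "lA x w" "D w = p" unfolding W_def by auto
        have "lS (fst (D w)) (fst p) \<and> lT (snd (D w)) (snd p)"
          using w(3) True reflS reflT by auto
        then have "lA w (M (fst p) (snd p))" using adj[OF w(1)] True by blast
        then show "w \<in> {w\<in>A. lA x w \<and> lA w (M (fst p) (snd p))}" using w by blast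
      qed
      then show ?thesis using finA[OF xA Mmap] True by (meson rev_finite_subset)
    next
      case False
      then have "W = {}" using Dmap unfolding W_def by auto
      then show ?thesis by simp
    qed
    have tb: "tens (bas (fst (D w))) (bas (snd (D w))) p = (if D w = p then 1 else (0::'k))" for w
      by (cases p; cases "D w") (auto simp: tens_def bas_def)
    have "(lin_comult car comult S T (omega car le (S \<union> T) x) :: 'e \<times> 'e \<Rightarrow> 'k) p
       = (\<Sum>w\<in>{w\<in>A. mu x w * tens (bas (fst (D w))) (bas (snd (D w))) p \<noteq> 0}.
            mu x w * tens (bas (fst (D w))) (bas (snd (D w))) p)"
      unfolding lin_comult_def formal_sum_def om A_def D_def by simp
    also have "\<dots> = (\<Sum>w\<in>W. mu x w * tens (bas (fst (D w))) (bas (snd (D w))) p)"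
    proof (rule fsum_eq[where P=A and f="\<lambda>w. mu x w * tens (bas (fst (D w))) (bas (snd (D w))) p", OF finW])
      show "{w \<in> A. mu x w * tens (bas (fst (D w))) (bas (snd (D w))) p \<noteq> 0} \<subseteq> W"
      proof
        fix w assume "w \<in> {w \<in> A. mu x w * tens (bas (fst (D w))) (bas (snd (D w))) p \<noteq> 0}"
        then have w: "w \<in> A" "mu x w \<noteq> 0" "D w = p" unfolding tb by (auto split: if_splits)
        have "lA x w" using w mobius_zero[OF lfA, of x w, where 'k='k] unfolding mu_def by blast
        then show "w \<in> W" using w unfolding W_def by blast
      qed
      show "W \<subseteq> A" unfolding W_def by blast
    qed
    also have "\<dots> = h1 p" unfolding h1_def W_def tb by (intro sum.cong) auto
    finally show ?thesis .
  qed
  have R: "(formal_sum (\<lambda>(x1, x2). tens (omega car le S x1) (omega car le T x2))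
           {(x1, x2). x1 \<in> car S \<and> x2 \<in> car T \<and> mult S T x1 x2 = x} :: 'e \<times> 'e \<Rightarrow> 'k) p = h2 p" for p
  proof -
    have omS: "(omega car le S y :: 'e \<Rightarrow> 'k) = muS y" for y
      using omega_eq[where car=car and le=le and I=S and x=y and 'k='k] lfS unfolding muS_def PS_def lS_def by simp
    have omT: "(omega car le T y :: 'e \<Rightarrow> 'k) = muT y" for y
      using omega_eq[where car=car and le=le and I=T and x=y and 'k='k] lfT unfolding muT_def PT_def lT_def by simp
    define g where "g = (\<lambda>q. muS (fst q) (fst p) * muT (snd q) (snd p))"
    have gi: "(\<lambda>(x1, x2). tens (omega car le S x1) (omega car le T x2)) q p = g q" for q :: "'e \<times> 'e"
      unfolding omS omT g_def by (cases q; cases p) (simp add: tens_def)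
    define Q where "Q = {(x1, x2). x1 \<in> car S \<and> x2 \<in> car T \<and> mult S T x1 x2 = x}"
    define B where "B = {q. fst q \<in> PS \<and> snd q \<in> PT \<and> M (fst q) (snd q) = x \<and>
      fst p \<in> PS \<and> snd p \<in> PT \<and> lS (fst q) (fst p) \<and> lT (snd q) (snd p)}"
    have finB: "finite B"
    proof (cases "fst p \<in> PS \<and> snd p \<in> PT")
      case True
      have "B \<subseteq> {z\<in>PS. lS x0 z \<and> lS z (fst p)} \<times> {z\<in>PT. lT y0 z \<and> lT z (snd p)}"
      proof
        fix q assume "q \<in> B"
        then have q: "fst q \<in> PS" "snd q \<in> PT" "M (fst q) (snd q) = x" "lS (fst q) (fst p)" "lT (snd q) (snd p)"
          unfolding B_def by auto
        have "lA x (M (fst q) (snd q))" using q(3) reflA[OF xA] by simp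
        then have "lS x0 (fst q) \<and> lT y0 (snd q)" using adj[OF xA q(1,2)] unfolding x0_def y0_def by blast
        then show "q \<in> {z\<in>PS. lS x0 z \<and> lS z (fst p)} \<times> {z\<in>PT. lT y0 z \<and> lT z (snd p)}"
          using q by (cases q) auto
      qed
      moreover have "finite ({z\<in>PS. lS x0 z \<and> lS z (fst p)} \<times> {z\<in>PT. lT y0 z \<and> lT z (snd p)})"
        using finS[OF x0] finT[OF y0] True by blast
      ultimately show ?thesis by (rule finite_subset)
    next
      case False
      then have "B = {}" unfolding B_def by auto
      then show ?thesis by simp
    qed
    have "(formal_sum (\<lambda>(x1, x2). tens (omega car le S x1) (omega car le T x2)) Q :: 'e \<times> 'e \<Rightarrow> 'k) p
        = (\<Sum>q\<in>{q\<in>Q. g q \<noteq> 0}. g q)"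
      unfolding formal_sum_def gi by simp
    also have "\<dots> = sum g B"
    proof (rule fsum_eq[where P=Q and f=g, OF finB])
      show "{q\<in>Q. g q \<noteq> 0} \<subseteq> B"
      proof
        fix q assume "q \<in> {q\<in>Q. g q \<noteq> 0}"
        then have q: "fst q \<in> PS" "snd q \<in> PT" "M (fst q) (snd q) = x" "muS (fst q) (fst p) \<noteq> 0" "muT (snd q) (snd p) \<noteq> 0"
          unfolding Q_def g_def PS_def PT_def M_def by auto
        have "fst p \<in> PS \<and> lS (fst q) (fst p)" using q(4) mobius_zero[OF lfS, of "fst q" "fst p", where 'k='k] unfolding muS_def by blast
        moreover have "snd p \<in> PT \<and> lT (snd q) (snd p)" using q(5) mobius_zero[OF lfT, of "snd q" "snd p", where 'k='k] unfolding muT_def by blast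
        ultimately show "q \<in> B" using q unfolding B_def by blast
      qed
      show "B \<subseteq> Q" unfolding B_def Q_def PS_def PT_def M_def by auto
    qed
    also have "\<dots> = h2 p" unfolding h2_def B_def g_def ..
    finally show ?thesis unfolding Q_def .
  qed
  show ?thesis using L R main by auto
qed

end
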